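(* Let $V$ be a locally convex topological real vector space and $C$ a cone in $V$. Assume $X$ and $Y$ are nonempty decomposably $C$-antichain-convex subsets of $V$, $X$ is closed, $\operatorname{co}(Y)$ is compact and $X\cap Y=\emptyset$. (1) If $X$ is $C$-upward, then $X$ and $Y$ are strictly separated. (2) If $X$ is $C$-downward, then $X$ and $Y$ are strictly separated.
   Context: A cone in $V$ is a subset $C$ with $\lambda C\subseteq C$ for all $\lambda>0$ (possibly empty, need not contain $0$). $S\subseteq V$ is $C$-antichain-convex iff for all $x,y\in S$ and $\lambda\in[0,1]$ with $y-x\notin C\cup(-C)$ one has $\lambda x+(1-\lambda)y\in S$; $S$ is decomposably $C$-antichain-convex iff $S$ is a Minkowski sum of finitely many $C$-antichain-convex subsets of $V$. $S$ is $C$-upward iff $S+C\subseteq S$; $C$-downward iff $S-C\subseteq S$. $X$ and $Y$ are strictly separated iff there is a continuous linear functional $f$ on $V$ with $\sup f[X]<\inf f[Y]$. *)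

theory Defs
  imports "HOL-Analysis.Analysis"
begin

text \<open>Locally convex topological real vector space (not necessarily Hausdorff):
  addition and scalar multiplication are jointly continuous (stated via the
  product filter of neighbourhood filters, i.e. continuity w.r.t. the product topology), and 0 has a
  neighbourhood base of convex open sets (convexity written out as in
  convex_def, since the global constant cannot be used inside the class specification) (hence, by translation, every point has).\<close>
class locally_convex_tvs = real_vector + topological_space +
  assumes continuous_add_lctvs: "\<And>x y :: 'a. ((\<lambda>p. fst p + snd p) \<longlongrightarrow> x + y) (nhds x \<times>\<^sub>F nhds y)"
  and continuous_scale_lctvs: "\<And>(c::real) (x::'a). ((\<lambda>p. fst p *\<^sub>R snd p) \<longlongrightarrow> c *\<^sub>R x) (nhds c \<times>\<^sub>F nhds x)"
  and locally_convex_lctvs: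
    "\<And>U::'a set. open U \<Longrightarrow> 0 \<in> U \<Longrightarrow> \<exists>W. open W \<and> 0 \<in> W \<and> W \<subseteq> U \<and>
       (\<forall>x\<in>W. \<forall>y\<in>W. \<forall>u::real. \<forall>v. 0 \<le> u \<longrightarrow> 0 \<le> v \<longrightarrow> u + v = 1 \<longrightarrow> u *\<^sub>R x + v *\<^sub>R y \<in> W)"

definition is_cone :: "'a::real_vector set \<Rightarrow> bool" where
  "is_cone C \<longleftrightarrow> (\<forall>l::real. l > 0 \<longrightarrow> (\<lambda>x. l *\<^sub>R x) ` C \<subseteq> C)"

definition antichain_convex :: "'a::real_vector set \<Rightarrow> 'a set \<Rightarrow> bool" where
  "antichain_convex C S \<longleftrightarrow>
     (\<forall>x\<in>S. \<forall>y\<in>S. \<forall>l::real. 0 \<le> l \<and> l \<le> 1 \<and> y - x \<notin> C \<union> uminus ` C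
        \<longrightarrow> l *\<^sub>R x + (1 - l) *\<^sub>R y \<in> S)"

definition minkowski_sum :: "'a::real_vector set \<Rightarrow> 'a set \<Rightarrow> 'a set" where
  "minkowski_sum A B = {a + b | a b. a \<in> A \<and> b \<in> B}"

definition minkowski_sum_list :: "'a::real_vector set list \<Rightarrow> 'a set" where
  "minkowski_sum_list Ss = foldr minkowski_sum Ss {0}"

definition decomp_antichain_convex :: "'a::real_vector set \<Rightarrow> 'a set \<Rightarrow> bool" where
  "decomp_antichain_convex C S \<longleftrightarrow>
     (\<exists>Ss. (\<forall>T\<in>set Ss. antichain_convex C T) \<and> S = minkowski_sum_list Ss)"

definition upward :: "'a::real_vector set \<Rightarrow> 'a set \<Rightarrow> bool" where
  "upward C S \<longleftrightarrow> minkowski_sum S C \<subseteq> S"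

definition downward :: "'a::real_vector set \<Rightarrow> 'a set \<Rightarrow> bool" where
  "downward C S \<longleftrightarrow> minkowski_sum S (uminus ` C) \<subseteq> S"

definition strictly_separated :: "'a::{real_vector,topological_space} set \<Rightarrow> 'a set \<Rightarrow> bool" where
  "strictly_separated X Y \<longleftrightarrow>
     (\<exists>f::'a \<Rightarrow> real. linear f \<and> continuous_on UNIV f \<and>
        (SUP x\<in>X. ereal (f x)) < (INF y\<in>Y. ereal (f y)))"

end

theory Submission
  imports Defs
begin


definition sublin :: "('a::real_vector \<Rightarrow> real) \<Rightarrow> bool" where
  "sublin p \<longleftrightarrow> (\<forall>x y. p (x + y) \<le> p x + p y) \<and> (\<forall>c x. c \<ge> 0 \<longrightarrow> p (c *\<^sub>R x) = c * p x)"

lemma sublin_zero: "sublin p \<Longrightarrow> p 0 = 0"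
  unfolding sublin_def by (metis mult_zero_left order_refl scaleR_zero_left)

lemma sublin_lower: "sublin p \<Longrightarrow> - p (- x) \<le> p x"
proof -
  assume s: "sublin p"
  have "p (x + - x) \<le> p x + p (-x)" using s unfolding sublin_def by blast
  then show ?thesis using sublin_zero[OF s] by simp
qed

lemma homog_from_le:
  fixes h :: "'a::real_vector \<Rightarrow> real"
  assumes le: "\<And>c x. c > 0 \<Longrightarrow> h (c *\<^sub>R x) \<le> c * h x" and z: "h 0 = 0"
  shows "\<forall>c x. c \<ge> 0 \<longrightarrow> h (c *\<^sub>R x) = c * h x"
proof (intro allI impI)
  fix c :: real and x :: 'a assume c: "c \<ge> 0"
  show "h (c *\<^sub>R x) = c * h x"
  proof (cases "c = 0")
    case True then show ?thesis using z by simp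
  next
    case False
    then have cp: "c > 0" using c by simp
    have "h x = h ((1/c) *\<^sub>R (c *\<^sub>R x))" using cp by simp
    also have "\<dots> \<le> (1/c) * h (c *\<^sub>R x)" using le[of "1/c" "c *\<^sub>R x"] cp by simp
    finally have "c * h x \<le> h (c *\<^sub>R x)" using cp by (simp add: field_simps)
    then show ?thesis using le[OF cp, of x] by simp
  qed
qed

lemma INF_add_bound:
  fixes A B :: "'b \<Rightarrow> real"
  assumes "S \<noteq> {}" "T \<noteq> {}" "bdd_below (A ` S)" "bdd_below (B ` T)"
    and "\<And>s t. s \<in> S \<Longrightarrow> t \<in> T \<Longrightarrow> a \<le> A s + B t"
  shows "a \<le> (INF s\<in>S. A s) + (INF t\<in>T. B t)"
proof -
  have "a - (INF s\<in>S. A s) \<le> B t" if t: "t \<in> T" for t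
  proof -
    have "a - B t \<le> (INF s\<in>S. A s)"
      by (rule cINF_greatest) (use assms t in force)+
    then show ?thesis by simp
  qed
  then have "a - (INF s\<in>S. A s) \<le> (INF t\<in>T. B t)"
    by (intro cINF_greatest) (use assms in auto)
  then show ?thesis by simp
qed

definition shiftf :: "('a::real_vector \<Rightarrow> real) \<Rightarrow> 'a \<Rightarrow> 'a \<Rightarrow> real" where
  "shiftf p y x = (INF t\<in>{0..}. p (x + t *\<^sub>R y) - t * p y)"

lemma shiftf_bdd:
  assumes "sublin p"
  shows "bdd_below ((\<lambda>t. p (x + t *\<^sub>R y) - t * p y) ` {0..})"
proof (rule bdd_belowI2)
  fix t :: real assume t: "t \<in> {0..}"
  have "p (t *\<^sub>R y) = p ((x + t *\<^sub>R y) + (- x))" by simp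
  also have "\<dots> \<le> p (x + t *\<^sub>R y) + p (- x)" using assms unfolding sublin_def by blast
  finally show "- p (- x) \<le> p (x + t *\<^sub>R y) - t * p y"
    using assms t unfolding sublin_def by auto
qed

lemma shiftf_le:
  assumes "sublin p" "t \<ge> 0"
  shows "shiftf p y x \<le> p (x + t *\<^sub>R y) - t * p y"
  unfolding shiftf_def
  by (rule cINF_lower) (use shiftf_bdd[OF assms(1)] assms(2) in auto)

lemma shiftf_below: "sublin p \<Longrightarrow> shiftf p y x \<le> p x"
  using shiftf_le[of p 0 y x] by simp

lemma shiftf_neg: "sublin p \<Longrightarrow> shiftf p y (- y) \<le> - p y"
  using shiftf_le[of p 1 y "-y"] sublin_zero[of p] by simp

lemma shiftf_sublin:
  assumes s: "sublin p"
  shows "sublin (shiftf p y)"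
proof -
  have sa: "p (a + b) \<le> p a + p b" for a b using s unfolding sublin_def by blast
  have sh: "c \<ge> 0 \<Longrightarrow> p (c *\<^sub>R a) = c * p a" for c a using s unfolding sublin_def by blast
  have add: "shiftf p y (x1 + x2) \<le> shiftf p y x1 + shiftf p y x2" for x1 x2
    unfolding shiftf_def[of p y x1] shiftf_def[of p y x2]
  proof (rule INF_add_bound)
    fix s t :: real assume st: "s \<in> {0..}" "t \<in> {0..}"
    have "shiftf p y (x1 + x2) \<le> p ((x1 + x2) + (s + t) *\<^sub>R y) - (s + t) * p y"
      using shiftf_le[OF s, of "s + t"] st by auto
    also have "p ((x1 + x2) + (s + t) *\<^sub>R y) = p ((x1 + s *\<^sub>R y) + (x2 + t *\<^sub>R y))"
      by (simp add: algebra_simps)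
    also have "\<dots> \<le> p (x1 + s *\<^sub>R y) + p (x2 + t *\<^sub>R y)" by (rule sa)
    finally show "shiftf p y (x1 + x2) \<le> (p (x1 + s *\<^sub>R y) - s * p y) + (p (x2 + t *\<^sub>R y) - t * p y)"
      by (simp add: algebra_simps)
  qed (use shiftf_bdd[OF s] in auto)
  have z: "shiftf p y 0 = 0"
  proof -
    have "(\<lambda>t. p (0 + t *\<^sub>R y) - t * p y) ` {0..} = (\<lambda>t::real. 0::real) ` {0..}"
      by (rule image_cong) (auto simp: sh)
    then have "shiftf p y 0 = (INF t::real\<in>{0..}. (0::real))"
      unfolding shiftf_def by simp
    then show ?thesis by simp
  qed
  have le: "shiftf p y (c *\<^sub>R x) \<le> c * shiftf p y x" if c: "c > 0" for c x
  proof -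
    have "shiftf p y (c *\<^sub>R x) / c \<le> shiftf p y x"
      unfolding shiftf_def[of p y x]
    proof (rule cINF_greatest)
      fix t :: real assume t: "t \<in> {0..}"
      have "shiftf p y (c *\<^sub>R x) \<le> p (c *\<^sub>R x + (c * t) *\<^sub>R y) - (c * t) * p y"
        using shiftf_le[OF s, of "c * t"] t c by auto
      also have "p (c *\<^sub>R x + (c * t) *\<^sub>R y) = c * p (x + t *\<^sub>R y)"
        using sh[of c "x + t *\<^sub>R y"] c by (simp add: algebra_simps)
      finally show "shiftf p y (c *\<^sub>R x) / c \<le> p (x + t *\<^sub>R y) - t * p y"
        using c by (simp add: field_simps)
    qed simp
    then show ?thesis using c by (simp add: field_simps)
  qed
  show ?thesis unfolding sublin_def using add homog_from_le[OF le z] by blast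
qed

lemma sublin_linear:
  assumes s: "sublin q" and odd: "\<And>y. q (- y) \<le> - q y"
  shows "linear q"
proof -
  have sa: "q (a + b) \<le> q a + q b" for a b using s unfolding sublin_def by blast
  have sh: "c \<ge> 0 \<Longrightarrow> q (c *\<^sub>R a) = c * q a" for c a using s unfolding sublin_def by blast
  have neg: "q (- y) = - q y" for y using odd[of y] sublin_lower[OF s, of y] by simp
  show ?thesis
  proof (rule linearI)
    fix a b
    have "q (- (a + b)) \<le> q (- a) + q (- b)" using sa[of "-a" "-b"] by (simp add: algebra_simps)
    then show "q (a + b) = q a + q b" using sa[of a b] neg[of "a+b"] neg[of a] neg[of b] by simp
  next
    fix r :: real and b
    show "q (r *\<^sub>R b) = r *\<^sub>R q b"
    proof (cases "r \<ge> 0")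
      case True then show ?thesis using sh by simp
    next
      case False
      have "q (r *\<^sub>R b) = q (- ((- r) *\<^sub>R b))" by simp
      also have "\<dots> = - ((- r) * q b)" using neg sh[of "-r" b] False by simp
      finally show ?thesis by simp
    qed
  qed
qed

lemma hb_core:
  fixes p :: "'a::real_vector \<Rightarrow> real"
  assumes s: "sublin p"
  shows "\<exists>f. linear f \<and> (\<forall>x. f x \<le> p x)"
proof -
  define A where "A = {q::'a \<Rightarrow> real. sublin q \<and> (\<forall>x. q x \<le> p x)}"
  define P where "P = (\<lambda>q1 q2::'a \<Rightarrow> real. \<forall>x. q2 x \<le> q1 x)"
  have po: "partial_order_on A (relation_of P A)"
    unfolding partial_order_on_def preorder_on_def refl_on_def trans_def antisym_def relation_of_def P_def
    by (auto intro!: ext intro: order_trans antisym)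
  have ch: "\<exists>u\<in>A. \<forall>a\<in>C. P a u" if C: "C \<in> Chains (relation_of P A)" for C
  proof (cases "C = {}")
    case True then show ?thesis using s unfolding A_def by auto
  next
    case ne: False
    have CA: "C \<subseteq> A" using C unfolding Chains_def relation_of_def by auto
    have cmp: "\<And>a b. a \<in> C \<Longrightarrow> b \<in> C \<Longrightarrow> P a b \<or> P b a"
      using C unfolding Chains_def relation_of_def by auto
    define m where "m x = (INF q\<in>C. q x)" for x
    have bdd: "bdd_below ((\<lambda>q. q x) ` C)" for x
    proof (rule bdd_belowI2)
      fix q assume "q \<in> C"
      then have "sublin q" "\<forall>x. q x \<le> p x" using CA unfolding A_def by auto
      then show "- p (- x) \<le> q x" using sublin_lower[of q x] by (metis neg_le_iff_le order_trans)
    qed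
    have mle: "m x \<le> q x" if "q \<in> C" for q x
      unfolding m_def by (rule cINF_lower) (use bdd that in auto)
    have subl: "\<And>q a. q \<in> C \<Longrightarrow> sublin q" using CA unfolding A_def by auto
    have add: "m (x + y) \<le> m x + m y" for x y
      unfolding m_def[of x] m_def[of y]
    proof (rule INF_add_bound)
      fix q1 q2 assume q: "q1 \<in> C" "q2 \<in> C"
      have "\<exists>q\<in>C. (\<forall>z. q z \<le> q1 z) \<and> (\<forall>z. q z \<le> q2 z)"
        using cmp[OF q] q unfolding P_def by auto
      then obtain q where qC: "q \<in> C" and l1: "\<forall>z. q z \<le> q1 z" and l2: "\<forall>z. q z \<le> q2 z" by blast
      have "m (x + y) \<le> q (x + y)" by (rule mle[OF qC])
      also have "\<dots> \<le> q x + q y" using subl[OF qC] unfolding sublin_def by blast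
      also have "\<dots> \<le> q1 x + q2 y" using l1 l2 by (simp add: add_mono)
      finally show "m (x + y) \<le> q1 x + q2 y" .
    qed (use ne bdd in auto)
    have z: "m 0 = 0"
    proof -
      have "(\<lambda>q. q 0) ` C = (\<lambda>q. 0::real) ` C"
        by (rule image_cong) (auto simp: sublin_zero subl)
      then show ?thesis unfolding m_def using ne by simp
    qed
    have le: "m (c *\<^sub>R x) \<le> c * m x" if c: "c > 0" for c x
    proof -
      have "m (c *\<^sub>R x) / c \<le> m x"
        unfolding m_def[of x]
      proof (rule cINF_greatest)
        fix q assume q: "q \<in> C"
        have "m (c *\<^sub>R x) \<le> q (c *\<^sub>R x)" by (rule mle[OF q])
        also have "\<dots> = c * q x" using subl[OF q] c unfolding sublin_def by auto
        finally show "m (c *\<^sub>R x) / c \<le> q x" using c by (simp add: field_simps)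
      qed (use ne in auto)
      then show ?thesis using c by (simp add: field_simps)
    qed
    have "sublin m" unfolding sublin_def using add homog_from_le[OF le z] by blast
    moreover have "\<forall>x. m x \<le> p x"
    proof
      fix x obtain q where "q \<in> C" using ne by blast
      then show "m x \<le> p x" using mle[of q x] CA unfolding A_def by (blast intro: order_trans)
    qed
    ultimately have "m \<in> A" unfolding A_def by auto
    moreover have "\<forall>a\<in>C. P a m" unfolding P_def using mle by auto
    ultimately show ?thesis by blast
  qed
  obtain q where qA: "q \<in> A" and qmin: "\<forall>a\<in>A. P q a \<longrightarrow> a = q"
    using predicate_Zorn[OF po ch] by blast
  have sq: "sublin q" and qp: "\<forall>x. q x \<le> p x" using qA unfolding A_def by auto
  have "q (- y) \<le> - q y" for y
  proof -
    have "\<forall>x. shiftf q y x \<le> p x"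
    proof
      fix x show "shiftf q y x \<le> p x" using shiftf_below[OF sq, of y x] qp[rule_format, of x] by linarith
    qed
    then have "shiftf q y \<in> A" unfolding A_def using shiftf_sublin[OF sq] by blast
    moreover have "P q (shiftf q y)" unfolding P_def using shiftf_below[OF sq] by auto
    ultimately have "shiftf q y = q" using qmin by blast
    then show ?thesis using shiftf_neg[OF sq, of y] by simp
  qed
  then have "linear q" by (rule sublin_linear[OF sq])
  then show ?thesis using qp by blast
qed

lemma hahn_banach:
  fixes p :: "'a::real_vector \<Rightarrow> real"
  assumes s: "sublin p"
  shows "\<exists>f. linear f \<and> (\<forall>x. f x \<le> p x) \<and> p y \<le> f y"
proof -
  obtain f where f: "linear f" "\<forall>x. f x \<le> shiftf p y x"
    using hb_core[OF shiftf_sublin[OF s]] by blast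
  have "f (- y) \<le> - p y" using f(2) shiftf_neg[OF s, of y] by (metis order_trans)
  moreover have "f (- y) = - f y" using f(1) by (simp add: linear_neg)
  ultimately show ?thesis using f shiftf_below[OF s] by (metis neg_le_iff_le order_trans)
qed



definition csum :: "'a::real_vector set \<Rightarrow> 'a set" where
  "csum C = {sum_list cs | cs. set cs \<subseteq> C}"

lemma csum_0: "0 \<in> csum C"
  unfolding csum_def by (rule CollectI, rule exI[of _ "[]"]) simp

lemma csum_C: "c \<in> C \<Longrightarrow> c \<in> csum C"
  unfolding csum_def by (rule CollectI, rule exI[of _ "[c]"]) simp

lemma csum_add: "d1 \<in> csum C \<Longrightarrow> d2 \<in> csum C \<Longrightarrow> d1 + d2 \<in> csum C"
  unfolding csum_def
proof (clarify)
  fix cs1 cs2 assume "set cs1 \<subseteq> C" "set cs2 \<subseteq> C"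
  then show "\<exists>cs. sum_list cs1 + sum_list cs2 = sum_list cs \<and> set cs \<subseteq> C"
    by (intro exI[of _ "cs1 @ cs2"]) simp
qed

lemma sum_list_scale: "sum_list (map (\<lambda>x. t *\<^sub>R x) cs) = t *\<^sub>R sum_list (cs :: 'a::real_vector list)"
  by (induction cs) (simp_all add: scaleR_add_right)

lemma sum_list_neg: "sum_list (map uminus cs) = - sum_list (cs :: 'a::real_vector list)"
  by (induction cs) simp_all

lemma csum_scale:
  assumes "is_cone C" "t > 0" "d \<in> csum C"
  shows "t *\<^sub>R d \<in> csum C"
proof -
  obtain cs where cs: "d = sum_list cs" "set cs \<subseteq> C" using assms(3) unfolding csum_def by blast
  have "set (map (\<lambda>x. t *\<^sub>R x) cs) \<subseteq> C" using cs(2) assms(1,2) unfolding is_cone_def by auto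
  then show ?thesis unfolding csum_def
    by (intro CollectI exI[of _ "map (\<lambda>x. t *\<^sub>R x) cs"]) (simp add: cs(1) sum_list_scale)
qed

lemma csum_neg:
  assumes "d \<in> csum (uminus ` C)"
  shows "- d \<in> csum C"
proof -
  obtain cs where cs: "d = sum_list cs" "set cs \<subseteq> uminus ` C" using assms unfolding csum_def by blast
  have "set (map uminus cs) \<subseteq> C" using cs(2) by auto
  then show ?thesis unfolding csum_def
    by (intro CollectI exI[of _ "map uminus cs"]) (simp add: cs(1) sum_list_neg)
qed

lemma upward_csum:
  assumes "upward C X" "x \<in> X" "d \<in> csum C"
  shows "x + d \<in> X"
proof -
  obtain cs where cs: "d = sum_list cs" "set cs \<subseteq> C" using assms(3) unfolding csum_def by blast
  have "\<And>x. x \<in> X \<Longrightarrow> x + sum_list cs \<in> X" using cs(2)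
  proof (induction cs)
    case Nil then show ?case by simp
  next
    case (Cons c cs)
    have "x + c \<in> minkowski_sum X C" using Cons.prems unfolding minkowski_sum_def by auto
    then have "x + c \<in> X" using assms(1) unfolding upward_def by auto
    then have "(x + c) + sum_list cs \<in> X" using Cons by auto
    then show ?case by (simp add: add.assoc)
  qed
  then show ?thesis using assms(2) cs(1) by blast
qed

lemma msl_Nil: "minkowski_sum_list [] = {0}"
  unfolding minkowski_sum_list_def by simp

lemma msl_Cons: "minkowski_sum_list (T # Ts) = minkowski_sum T (minkowski_sum_list Ts)"
  unfolding minkowski_sum_list_def by simp

lemma segment_decomp:
  assumes cone: "is_cone C"
  shows "\<forall>T\<in>set Ts. antichain_convex C T \<Longrightarrow> a \<in> minkowski_sum_list Ts \<Longrightarrow> b \<in> minkowski_sum_list Ts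
    \<Longrightarrow> 0 < l \<Longrightarrow> l < 1 \<Longrightarrow>
    \<exists>z\<in>minkowski_sum_list Ts. \<exists>d\<in>csum C. l *\<^sub>R a + (1 - l) *\<^sub>R b = z + d"
proof (induction Ts arbitrary: a b)
  case Nil
  then show ?case using csum_0[of C] by (auto simp: msl_Nil)
next
  case (Cons T Ts)
  obtain a1 a2 where a: "a = a1 + a2" "a1 \<in> T" "a2 \<in> minkowski_sum_list Ts"
    using Cons.prems(2) unfolding msl_Cons minkowski_sum_def by blast
  obtain b1 b2 where b: "b = b1 + b2" "b1 \<in> T" "b2 \<in> minkowski_sum_list Ts"
    using Cons.prems(3) unfolding msl_Cons minkowski_sum_def by blast
  have acTs: "\<forall>T\<in>set Ts. antichain_convex C T" using Cons.prems(1) by simp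
  obtain z2 d2 where z2: "z2 \<in> minkowski_sum_list Ts" "d2 \<in> csum C"
    "l *\<^sub>R a2 + (1 - l) *\<^sub>R b2 = z2 + d2"
    using Cons.IH[OF acTs a(3) b(3) Cons.prems(4,5)] by blast
  have acT: "antichain_convex C T" using Cons.prems(1) by simp
  have "\<exists>z1\<in>T. \<exists>d1\<in>csum C. l *\<^sub>R a1 + (1 - l) *\<^sub>R b1 = z1 + d1"
  proof (cases "b1 - a1 \<in> C")
    case True
    have "(\<lambda>x. (1 - l) *\<^sub>R x) ` C \<subseteq> C" using cone Cons.prems(5) unfolding is_cone_def by simp
    then have "(1 - l) *\<^sub>R (b1 - a1) \<in> C" using True by blast
    moreover have "l *\<^sub>R a1 + (1 - l) *\<^sub>R b1 = a1 + (1 - l) *\<^sub>R (b1 - a1)"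
      by (simp add: algebra_simps)
    ultimately show ?thesis using a(2) csum_C by blast
  next
    case nC: False
    show ?thesis
    proof (cases "b1 - a1 \<in> uminus ` C")
      case True
      then obtain c where "c \<in> C" "b1 - a1 = - c" by blast
      then have "a1 - b1 \<in> C" by (metis minus_diff_eq minus_minus)
      moreover have "(\<lambda>x. l *\<^sub>R x) ` C \<subseteq> C" using cone Cons.prems(4) unfolding is_cone_def by simp
      ultimately have "l *\<^sub>R (a1 - b1) \<in> C" by blast
      moreover have "l *\<^sub>R a1 + (1 - l) *\<^sub>R b1 = b1 + l *\<^sub>R (a1 - b1)"
        by (simp add: algebra_simps)
      ultimately show ?thesis using b(2) csum_C by blast
    next
      case False
      then have "b1 - a1 \<notin> C \<union> uminus ` C" using nC by blast
      then have "l *\<^sub>R a1 + (1 - l) *\<^sub>R b1 \<in> T"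
        using acT a(2) b(2) Cons.prems(4,5) unfolding antichain_convex_def by simp
      moreover have "l *\<^sub>R a1 + (1 - l) *\<^sub>R b1 = (l *\<^sub>R a1 + (1 - l) *\<^sub>R b1) + 0" by simp
      ultimately show ?thesis using csum_0[of C] by blast
    qed
  qed
  then obtain z1 d1 where z1: "z1 \<in> T" "d1 \<in> csum C" "l *\<^sub>R a1 + (1 - l) *\<^sub>R b1 = z1 + d1" by blast
  have "z1 + z2 \<in> minkowski_sum_list (T # Ts)"
    unfolding msl_Cons minkowski_sum_def using z1(1) z2(1) by blast
  moreover have "d1 + d2 \<in> csum C" using csum_add z1(2) z2(2) by blast
  moreover have "l *\<^sub>R a + (1 - l) *\<^sub>R b = (z1 + z2) + (d1 + d2)"
  proof -
    have "l *\<^sub>R a + (1 - l) *\<^sub>R b = (l *\<^sub>R a1 + (1 - l) *\<^sub>R b1) + (l *\<^sub>R a2 + (1 - l) *\<^sub>R b2)"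
      using a(1) b(1) by (simp add: algebra_simps)
    also have "\<dots> = (z1 + d1) + (z2 + d2)" using z1(3) z2(3) by simp
    finally show ?thesis by (simp add: algebra_simps)
  qed
  ultimately show ?case by blast
qed

lemma cone_neg: "is_cone C \<Longrightarrow> is_cone (uminus ` C)"
  unfolding is_cone_def
proof (intro allI impI subsetI)
  fix l :: real and z
  assume h: "\<forall>l>0. (\<lambda>x. l *\<^sub>R x) ` C \<subseteq> C" and l: "0 < l" and z: "z \<in> (\<lambda>x. l *\<^sub>R x) ` uminus ` C"
  then obtain c where c: "c \<in> C" "z = l *\<^sub>R (- c)" by blast
  have "l *\<^sub>R c \<in> C" using h l c(1) by blast
  moreover have "z = - (l *\<^sub>R c)" using c(2) by simp
  ultimately show "z \<in> uminus ` C" by blast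
qed

lemma antichain_neg: "antichain_convex (uminus ` C) T = antichain_convex C T"
proof -
  have "uminus ` C \<union> uminus ` uminus ` C = C \<union> uminus ` C" by (auto simp: image_image)
  then show ?thesis unfolding antichain_convex_def by simp
qed

lemma decomp_neg: "decomp_antichain_convex C X \<Longrightarrow> decomp_antichain_convex (uminus ` C) X"
  unfolding decomp_antichain_convex_def antichain_neg by blast

lemma segment_decomp_minus:
  assumes "is_cone C" "\<forall>T\<in>set Ts. antichain_convex C T" "a \<in> minkowski_sum_list Ts" "b \<in> minkowski_sum_list Ts"
    "0 < l" "l < 1"
  shows "\<exists>z\<in>minkowski_sum_list Ts. \<exists>d\<in>csum C. l *\<^sub>R a + (1 - l) *\<^sub>R b = z - d"
proof -
  obtain z d where "z \<in> minkowski_sum_list Ts" "d \<in> csum (uminus ` C)" "l *\<^sub>R a + (1 - l) *\<^sub>R b = z + d"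
    using segment_decomp[OF cone_neg[OF assms(1)], of Ts a b l] assms(2-6) antichain_neg by blast
  moreover have "- d \<in> csum C" using csum_neg calculation(2) by blast
  ultimately show ?thesis by (metis diff_minus_eq_add minus_minus)
qed

lemma convex_upward:
  assumes "is_cone C" "decomp_antichain_convex C X" "upward C X"
  shows "convex X"
proof -
  obtain Ts where Ts: "\<forall>T\<in>set Ts. antichain_convex C T" "X = minkowski_sum_list Ts"
    using assms(2) unfolding decomp_antichain_convex_def by blast
  show ?thesis unfolding convex_def
  proof (intro ballI allI impI)
    fix x y and u v :: real assume xy: "x \<in> X" "y \<in> X" and uv: "0 \<le> u" "0 \<le> v" "u + v = 1"
    show "u *\<^sub>R x + v *\<^sub>R y \<in> X"
    proof (cases "u = 0 \<or> u = 1")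
      case True then show ?thesis using xy uv by auto
    next
      case False
      then have "0 < u" "u < 1" using uv by auto
      then obtain z d where "z \<in> X" "d \<in> csum C" "u *\<^sub>R x + (1 - u) *\<^sub>R y = z + d"
        using segment_decomp[OF assms(1) Ts(1)] xy Ts(2) by blast
      moreover have "v = 1 - u" using uv by simp
      ultimately show ?thesis using upward_csum[OF assms(3)] by simp
    qed
  qed
qed

lemma hull_disjoint_upward:
  assumes "is_cone C" "decomp_antichain_convex C Y" "upward C X" "X \<inter> Y = {}"
  shows "X \<inter> convex hull Y = {}"
proof -
  obtain Ts where Ts: "\<forall>T\<in>set Ts. antichain_convex C T" "Y = minkowski_sum_list Ts"
    using assms(2) unfolding decomp_antichain_convex_def by blast
  define Z where "Z = {y - d | y d. y \<in> Y \<and> d \<in> csum C}"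
  have YZ: "Y \<subseteq> Z" unfolding Z_def using csum_0[of C] by force
  have "convex Z" unfolding convex_def
  proof (intro ballI allI impI)
    fix x y and u v :: real assume xy: "x \<in> Z" "y \<in> Z" and uv: "0 \<le> u" "0 \<le> v" "u + v = 1"
    show "u *\<^sub>R x + v *\<^sub>R y \<in> Z"
    proof (cases "u = 0 \<or> u = 1")
      case True then show ?thesis using xy uv by auto
    next
      case False
      then have u: "0 < u" "u < 1" using uv by auto
      obtain y1 d1 where 1: "x = y1 - d1" "y1 \<in> Y" "d1 \<in> csum C" using xy(1) unfolding Z_def by blast
      obtain y2 d2 where 2: "y = y2 - d2" "y2 \<in> Y" "d2 \<in> csum C" using xy(2) unfolding Z_def by blast
      obtain z d where zd: "z \<in> Y" "d \<in> csum C" "u *\<^sub>R y1 + (1 - u) *\<^sub>R y2 = z - d"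
        using segment_decomp_minus[OF assms(1) Ts(1)] 1(2) 2(2) Ts(2) u by blast
      have v: "v = 1 - u" using uv by simp
      have "u *\<^sub>R x + v *\<^sub>R y = (u *\<^sub>R y1 + (1 - u) *\<^sub>R y2) - (u *\<^sub>R d1 + (1 - u) *\<^sub>R d2)"
        unfolding 1(1) 2(1) v by (simp add: algebra_simps)
      then have "u *\<^sub>R x + v *\<^sub>R y = z - (d + (u *\<^sub>R d1 + (1 - u) *\<^sub>R d2))"
        by (simp only: zd(3) diff_diff_add)
      moreover have "d + (u *\<^sub>R d1 + (1 - u) *\<^sub>R d2) \<in> csum C"
        using csum_add[OF zd(2) csum_add[OF csum_scale[OF assms(1) u(1) 1(3)] csum_scale[OF assms(1) _ 2(3), of "1 - u"]]] u(2)
        by simp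
      ultimately show ?thesis unfolding Z_def using zd(1) by blast
    qed
  qed
  then have "convex hull Y \<subseteq> Z" using YZ by (simp add: hull_minimal)
  moreover have "X \<inter> Z = {}"
  proof (rule ccontr)
    assume "X \<inter> Z \<noteq> {}"
    then obtain x y d where "x \<in> X" "x = y - d" "y \<in> Y" "d \<in> csum C" unfolding Z_def by blast
    then have "y \<in> X" using upward_csum[OF assms(3)] by fastforce
    then show False using \<open>y \<in> Y\<close> assms(4) by blast
  qed
  ultimately show ?thesis by blast
qed



lemma lc_add_open:
  fixes x y :: "'a::locally_convex_tvs"
  assumes "open U" "x + y \<in> U"
  shows "\<exists>A B. open A \<and> open B \<and> x \<in> A \<and> y \<in> B \<and> (\<forall>a\<in>A. \<forall>b\<in>B. a + b \<in> U)"
proof -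
  have "eventually (\<lambda>p. fst p + snd p \<in> U) (nhds x \<times>\<^sub>F nhds y)"
    using continuous_add_lctvs[of x y] assms unfolding tendsto_def by blast
  then obtain Pf Pg where P: "eventually Pf (nhds x)" "eventually Pg (nhds y)"
    "\<forall>a b. Pf a \<longrightarrow> Pg b \<longrightarrow> fst (a, b) + snd (a, b) \<in> U"
    unfolding eventually_prod_filter by blast
  obtain A where A: "open A" "x \<in> A" "\<forall>a\<in>A. Pf a" using P(1) unfolding eventually_nhds by blast
  obtain B where B: "open B" "y \<in> B" "\<forall>b\<in>B. Pg b" using P(2) unfolding eventually_nhds by blast
  have "\<forall>a\<in>A. \<forall>b\<in>B. a + b \<in> U" using A(3) B(3) P(3) by simp
  then show ?thesis using A(1,2) B(1,2) by blast
qed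

lemma lc_scale_open:
  fixes x :: "'a::locally_convex_tvs"
  assumes "open U" "c *\<^sub>R x \<in> U"
  shows "\<exists>e>0. \<exists>B. open B \<and> x \<in> B \<and> (\<forall>c'. \<bar>c' - c\<bar> < e \<longrightarrow> (\<forall>b\<in>B. c' *\<^sub>R b \<in> U))"
proof -
  have "eventually (\<lambda>p. fst p *\<^sub>R snd p \<in> U) (nhds c \<times>\<^sub>F nhds x)"
    using continuous_scale_lctvs[of c x] assms unfolding tendsto_def by blast
  then obtain Pf Pg where P: "eventually Pf (nhds c)" "eventually Pg (nhds x)"
    "\<forall>a b. Pf a \<longrightarrow> Pg b \<longrightarrow> fst (a, b) *\<^sub>R snd (a, b) \<in> U"
    unfolding eventually_prod_filter by blast
  obtain e where e: "e > 0" "\<forall>c'. dist c' c < e \<longrightarrow> Pf c'" using P(1) unfolding eventually_nhds_metric by blast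
  obtain B where B: "open B" "x \<in> B" "\<forall>b\<in>B. Pg b" using P(2) unfolding eventually_nhds by blast
  have "\<forall>c'. \<bar>c' - c\<bar> < e \<longrightarrow> (\<forall>b\<in>B. c' *\<^sub>R b \<in> U)"
    using e(2) B(3) P(3) by (simp add: dist_real_def)
  then show ?thesis using e(1) B(1,2) by blast
qed

lemma lc_open_translate:
  fixes a :: "'a::locally_convex_tvs"
  assumes "open U"
  shows "open ((\<lambda>z. z + a) -` U)"
proof (rule Topological_Spaces.openI)
  fix z assume "z \<in> (\<lambda>z. z + a) -` U"
  then have za: "z + a \<in> U" by simp
  obtain A B where AB: "open A" "z \<in> A" "a \<in> B" "\<forall>x\<in>A. \<forall>b\<in>B. x + b \<in> U"
    using lc_add_open[OF assms za] by blast
  then have "A \<subseteq> (\<lambda>z. z + a) -` U" by blast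
  then show "\<exists>T. open T \<and> z \<in> T \<and> T \<subseteq> (\<lambda>z. z + a) -` U" using AB(1,2) by blast
qed

lemma lc_open_scale:
  fixes c :: real
  assumes "open (U :: 'a::locally_convex_tvs set)"
  shows "open ((\<lambda>z. c *\<^sub>R z) -` U)"
proof (rule Topological_Spaces.openI)
  fix z assume "z \<in> (\<lambda>z. c *\<^sub>R z) -` U"
  then have cz: "c *\<^sub>R z \<in> U" by simp
  obtain e B where eB: "e > 0" "open B" "z \<in> B" "\<forall>c'. \<bar>c' - c\<bar> < e \<longrightarrow> (\<forall>b\<in>B. c' *\<^sub>R b \<in> U)"
    using lc_scale_open[OF assms cz] by blast
  have "\<forall>b\<in>B. c *\<^sub>R b \<in> U" using eB(1) eB(4)[rule_format, of c] by simp
  then have "B \<subseteq> (\<lambda>z. c *\<^sub>R z) -` U" by blast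
  then show "\<exists>T. open T \<and> z \<in> T \<and> T \<subseteq> (\<lambda>z. c *\<^sub>R z) -` U" using eB(2,3) by blast
qed

lemma lc_open_affine:
  fixes c :: real and a :: "'a::locally_convex_tvs"
  assumes "open U"
  shows "open ((\<lambda>z. c *\<^sub>R (z + a)) -` U)"
proof -
  have "(\<lambda>z. c *\<^sub>R (z + a)) -` U = (\<lambda>z. z + a) -` ((\<lambda>z. c *\<^sub>R z) -` U)" by auto
  then show ?thesis using lc_open_translate[OF lc_open_scale[OF assms]] by simp
qed

lemma lc_absorb:
  fixes x :: "'a::locally_convex_tvs"
  assumes "open U" "0 \<in> U"
  shows "\<exists>e>0. e *\<^sub>R x \<in> U"
proof -
  have "0 *\<^sub>R x \<in> U" using assms(2) by simp
  then obtain e B where eB: "e > 0" "x \<in> B" "\<forall>c'. \<bar>c' - 0\<bar> < e \<longrightarrow> (\<forall>b\<in>B. c' *\<^sub>R b \<in> U)"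
    using lc_scale_open[OF assms(1), of 0 x] by blast
  then have "(e/2) *\<^sub>R x \<in> U" by simp
  then show ?thesis using eB(1) by (intro exI[of _ "e/2"]) simp
qed

lemma lc_convex_nbhd:
  fixes U :: "'a::locally_convex_tvs set"
  assumes "open U" "0 \<in> U"
  shows "\<exists>W. open W \<and> 0 \<in> W \<and> W \<subseteq> U \<and> convex W"
proof -
  obtain W where W: "open W" "0 \<in> W" "W \<subseteq> U"
    "\<forall>x\<in>W. \<forall>y\<in>W. \<forall>u::real. \<forall>v. 0 \<le> u \<longrightarrow> 0 \<le> v \<longrightarrow> u + v = 1 \<longrightarrow> u *\<^sub>R x + v *\<^sub>R y \<in> W"
    using locally_convex_lctvs[OF assms] by blast
  have "convex W" unfolding convex_def using W(4) by blast
  then show ?thesis using W(1-3) by blast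
qed



definition mink :: "'a::real_vector set \<Rightarrow> 'a \<Rightarrow> real" where
  "mink U z = Inf {t. 0 < t \<and> (1/t) *\<^sub>R z \<in> U}"

lemma mink_mono:
  assumes "convex U" "0 \<in> U" "0 < s" "s \<le> t" "(1/s) *\<^sub>R z \<in> U"
  shows "(1/t) *\<^sub>R z \<in> U"
proof -
  have t: "t > 0" using assms by simp
  have mem: "(s/t) *\<^sub>R ((1/s) *\<^sub>R z) + (1 - s/t) *\<^sub>R 0 \<in> U"
    by (rule convexD[OF assms(1) assms(5) assms(2)]) (use assms t in auto)
  have eq: "(s/t) *\<^sub>R ((1/s) *\<^sub>R z) + (1 - s/t) *\<^sub>R 0 = (1/t) *\<^sub>R z"
    using assms(3) by simp
  show ?thesis using mem unfolding eq .
qed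

locale mink_set =
  fixes U :: "'a::locally_convex_tvs set"
  assumes op: "open U" and cv: "convex U" and z0: "0 \<in> U"
begin

definition S where "S z = {t. 0 < t \<and> (1/t) *\<^sub>R z \<in> U}"

lemma mink_S: "mink U z = Inf (S z)" unfolding mink_def S_def by simp

lemma S_ne: "S z \<noteq> {}"
proof -
  obtain e where e: "e > 0" "e *\<^sub>R z \<in> U" using lc_absorb[OF op z0] by blast
  then have "1/e \<in> S z" unfolding S_def by simp
  then show ?thesis by blast
qed

lemma S_bdd: "bdd_below (S z)"
  unfolding S_def by (rule bdd_belowI[of _ 0]) simp

lemma mink_le: "t \<in> S z \<Longrightarrow> mink U z \<le> t"
  unfolding mink_S by (rule cInf_lower[OF _ S_bdd])

lemma mink_sublin: "sublin (mink U)"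
proof -
  have add: "mink U (x + y) \<le> mink U x + mink U y" for x y
  proof -
    have "mink U (x + y) \<le> (INF s\<in>S x. s) + (INF t\<in>S y. t)"
    proof (rule INF_add_bound)
      fix s t assume st: "s \<in> S x" "t \<in> S y"
      then have s: "s > 0" "(1/s) *\<^sub>R x \<in> U" and t: "t > 0" "(1/t) *\<^sub>R y \<in> U" unfolding S_def by auto
      have "(s/(s+t)) *\<^sub>R ((1/s) *\<^sub>R x) + (t/(s+t)) *\<^sub>R ((1/t) *\<^sub>R y) \<in> U"
      proof (rule convexD[OF cv s(2) t(2)])
        have "s/(s+t) + t/(s+t) = (s+t)/(s+t)" by (rule add_divide_distrib[symmetric])
        then show "s/(s+t) + t/(s+t) = 1" using s t by simp
      qed (use s t in auto)
      moreover have "(s/(s+t)) *\<^sub>R ((1/s) *\<^sub>R x) + (t/(s+t)) *\<^sub>R ((1/t) *\<^sub>R y) = (1/(s+t)) *\<^sub>R (x + y)"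
      proof -
        have st: "s + t \<noteq> 0" using s t by simp
        show ?thesis using s t st by (simp add: scaleR_add_right)
      qed
      ultimately have "s + t \<in> S (x + y)" unfolding S_def using s t by simp
      then show "mink U (x + y) \<le> s + t" by (rule mink_le)
    qed (use S_ne S_bdd in auto)
    then show ?thesis unfolding mink_S by simp
  qed
  have le: "mink U (c *\<^sub>R x) \<le> c * mink U x" if c: "c > 0" for c x
  proof -
    have "mink U (c *\<^sub>R x) / c \<le> Inf (S x)"
    proof (rule cInf_greatest[OF S_ne])
      fix t assume "t \<in> S x"
      then have t: "t > 0" "(1/t) *\<^sub>R x \<in> U" unfolding S_def by auto
      have "(1/(c*t)) *\<^sub>R (c *\<^sub>R x) = (1/t) *\<^sub>R x" using c by simp
      then have "c * t \<in> S (c *\<^sub>R x)" unfolding S_def using t c by simp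
      then have "mink U (c *\<^sub>R x) \<le> c * t" by (rule mink_le)
      then show "mink U (c *\<^sub>R x) / c \<le> t" using c by (simp add: field_simps)
    qed
    then show ?thesis using c unfolding mink_S by (simp add: field_simps)
  qed
  have z: "mink U 0 = 0"
  proof -
    have "S 0 = {0<..}" unfolding S_def using z0 by auto
    then show ?thesis unfolding mink_S by simp
  qed
  show ?thesis unfolding sublin_def using add homog_from_le[OF le z] by blast
qed

lemma mink_U: "u \<in> U \<Longrightarrow> mink U u \<le> 1"
  by (rule mink_le) (simp add: S_def)

lemma mink_notU:
  assumes "z \<notin> U" shows "1 \<le> mink U z"
proof (rule ccontr)
  assume "\<not> 1 \<le> mink U z"
  then have "Inf (S z) < 1" unfolding mink_S by simp
  then obtain t where t: "t \<in> S z" "t < 1" using cInf_lessD[OF S_ne] by blast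
  then have "(1/1) *\<^sub>R z \<in> U" using mink_mono[OF cv z0, of t 1 z] unfolding S_def by auto
  then show False using assms by simp
qed

end


lemma lc_separation:
  fixes X K :: "'a::locally_convex_tvs set"
  assumes clX: "closed X" and cvX: "convex X" and cK: "compact K" and cvK: "convex K"
    and neX: "X \<noteq> {}" and neK: "K \<noteq> {}" and dis: "X \<inter> K = {}"
  shows "\<exists>(f::'a \<Rightarrow> real) \<delta>. linear f \<and> continuous_on UNIV f \<and> \<delta> > 0 \<and> (\<forall>x\<in>X. \<forall>k\<in>K. f k + \<delta> \<le> f x)"
proof -
  have opX: "open (- X)" using clX by (simp add: open_Compl)
  have "\<forall>k\<in>K. \<exists>A B. open A \<and> open B \<and> k \<in> A \<and> 0 \<in> B \<and> (\<forall>a\<in>A. \<forall>b\<in>B. a + b \<in> - X)"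
  proof
    fix k assume "k \<in> K"
    then have "k + 0 \<in> - X" using dis by auto
    then show "\<exists>A B. open A \<and> open B \<and> k \<in> A \<and> 0 \<in> B \<and> (\<forall>a\<in>A. \<forall>b\<in>B. a + b \<in> - X)"
      using lc_add_open[OF opX] by blast
  qed
  then obtain AA BB where AB: "\<And>k. k \<in> K \<Longrightarrow> open (AA k) \<and> open (BB k) \<and> k \<in> AA k \<and> 0 \<in> BB k \<and>
      (\<forall>a\<in>AA k. \<forall>b\<in>BB k. a + b \<in> - X)"
    by metis
  obtain K' where K': "K' \<subseteq> K" "finite K'" "K \<subseteq> (\<Union>c\<in>K'. AA c)"
  proof (rule compactE_image[OF cK, of K AA])
    show "\<And>T. T \<in> K \<Longrightarrow> open (AA T)" using AB by blast
    show "K \<subseteq> (\<Union>c\<in>K. AA c)" using AB by blast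
  qed blast
  define B0 where "B0 = (\<Inter>c\<in>K'. BB c)"
  have opB0: "open B0" unfolding B0_def using K' AB by (intro open_INT) auto
  have zB0: "0 \<in> B0" unfolding B0_def using K' AB by auto
  obtain W where W: "open W" "0 \<in> W" "W \<subseteq> B0" "convex W" using lc_convex_nbhd[OF opB0 zB0] by blast
  have Wsep: "k + w \<notin> X" if kK: "k \<in> K" and wW: "w \<in> W" for k w
  proof -
    obtain c where c: "c \<in> K'" "k \<in> AA c" using K'(3) kK by blast
    have "w \<in> BB c" using W(3) wW c(1) unfolding B0_def by blast
    then show ?thesis using AB[of c] c K'(1) by blast
  qed
  obtain x0 where x0: "x0 \<in> X" using neX by blast
  obtain k0 where k0: "k0 \<in> K" using neK by blast
  define a0 where "a0 = x0 - k0"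
  define U where "U = {a0 - x + k + w | x k w. x \<in> X \<and> k \<in> K \<and> w \<in> W}"
  have zU: "0 \<in> U" unfolding U_def a0_def using x0 k0 W(2) by (intro CollectI exI[of _ x0] exI[of _ k0] exI[of _ 0]) simp
  have a0U: "a0 \<notin> U"
  proof
    assume "a0 \<in> U"
    then obtain x k w where "a0 = a0 - x + k + w" "x \<in> X" "k \<in> K" "w \<in> W" unfolding U_def by blast
    then have "k + w = x" by (simp add: algebra_simps)
    then show False using Wsep \<open>x \<in> X\<close> \<open>k \<in> K\<close> \<open>w \<in> W\<close> by blast
  qed
  have cvU: "convex U" unfolding convex_def
  proof (intro ballI allI impI)
    fix z1 z2 and u v :: real assume z: "z1 \<in> U" "z2 \<in> U" and uv: "0 \<le> u" "0 \<le> v" "u + v = 1"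
    obtain x1 k1 w1 where 1: "z1 = a0 - x1 + k1 + w1" "x1 \<in> X" "k1 \<in> K" "w1 \<in> W" using z(1) unfolding U_def by blast
    obtain x2 k2 w2 where 2: "z2 = a0 - x2 + k2 + w2" "x2 \<in> X" "k2 \<in> K" "w2 \<in> W" using z(2) unfolding U_def by blast
    have v: "v = 1 - u" using uv by simp
    have "u *\<^sub>R z1 + v *\<^sub>R z2 = a0 - (u *\<^sub>R x1 + v *\<^sub>R x2) + (u *\<^sub>R k1 + v *\<^sub>R k2) + (u *\<^sub>R w1 + v *\<^sub>R w2)"
      unfolding 1(1) 2(1) v by (simp add: algebra_simps)
    moreover have "u *\<^sub>R x1 + v *\<^sub>R x2 \<in> X" using convexD[OF cvX 1(2) 2(2) uv] .
    moreover have "u *\<^sub>R k1 + v *\<^sub>R k2 \<in> K" using convexD[OF cvK 1(3) 2(3) uv] .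
    moreover have "u *\<^sub>R w1 + v *\<^sub>R w2 \<in> W" using convexD[OF W(4) 1(4) 2(4) uv] .
    ultimately show "u *\<^sub>R z1 + v *\<^sub>R z2 \<in> U" unfolding U_def by blast
  qed
  have opU: "open U"
  proof (rule Topological_Spaces.openI)
    fix z assume "z \<in> U"
    then obtain x k w where xkw: "z = a0 - x + k + w" "x \<in> X" "k \<in> K" "w \<in> W" unfolding U_def by blast
    define T where "T = (\<lambda>y. y + (x - k - a0)) -` W"
    have "open T" unfolding T_def by (rule lc_open_translate[OF W(1)])
    moreover have "z \<in> T" unfolding T_def using xkw by (simp add: algebra_simps)
    moreover have "T \<subseteq> U"
    proof
      fix y assume "y \<in> T"
      then have "y + (x - k - a0) \<in> W" unfolding T_def by simp
      moreover have "y = a0 - x + k + (y + (x - k - a0))" by (simp add: algebra_simps)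
      ultimately show "y \<in> U" unfolding U_def using xkw(2,3) by blast
    qed
    ultimately show "\<exists>T. open T \<and> z \<in> T \<and> T \<subseteq> U" by blast
  qed
  interpret M: mink_set U using opU cvU zU by unfold_locales
  obtain f where f: "linear f" "\<forall>x. f x \<le> mink U x" "mink U a0 \<le> f a0"
    using hahn_banach[OF M.mink_sublin, of a0] by blast
  have fa0: "1 \<le> f a0" using M.mink_notU[OF a0U] f(3) by simp
  have fU: "f z \<le> 1" if "z \<in> U" for z using f(2) M.mink_U[OF that] by (metis order_trans)
  have key: "f k + f w \<le> f x" if "x \<in> X" "k \<in> K" "w \<in> W" for x k w
  proof -
    have "a0 - x + k + w \<in> U" unfolding U_def using that by blast
    then have "f (a0 - x + k + w) \<le> 1" by (rule fU)
    moreover have "f (a0 - x + k + w) = f a0 - f x + f k + f w"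
      using f(1) by (simp add: linear_add linear_diff)
    ultimately show ?thesis using fa0 by simp
  qed
  obtain e where e: "e > 0" "e *\<^sub>R a0 \<in> W" using lc_absorb[OF W(1) W(2)] by blast
  define \<delta> where "\<delta> = e * f a0"
  have dpos: "\<delta> > 0" unfolding \<delta>_def using e(1) fa0 by simp
  have fe: "f (e *\<^sub>R a0) = \<delta>" unfolding \<delta>_def using f(1) by (simp add: linear_scale)
  have sep: "\<forall>x\<in>X. \<forall>k\<in>K. f k + \<delta> \<le> f x" using key[OF _ _ e(2)] fe by simp
  define N where "N = U \<inter> (\<lambda>z. (-1) *\<^sub>R z) -` U"
  have opN: "open N" unfolding N_def using opU lc_open_scale[OF opU, of "-1"] by (intro open_Int)
  have zN: "0 \<in> N" unfolding N_def using zU by simp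
  have fN: "\<bar>f z\<bar> \<le> 1" if "z \<in> N" for z
  proof -
    have "f z \<le> 1" using that fU unfolding N_def by blast
    moreover have "f ((-1) *\<^sub>R z) \<le> 1" using that fU unfolding N_def by blast
    moreover have "f ((-1) *\<^sub>R z) = - f z" using f(1) by (simp add: linear_neg)
    ultimately show ?thesis by simp
  qed
  have cont: "continuous_on UNIV f"
    unfolding continuous_on_open_vimage[OF open_UNIV]
  proof (intro allI impI)
    fix B :: "real set" assume opB: "open B"
    show "open (f -` B \<inter> UNIV)"
    proof (rule Topological_Spaces.openI)
      fix z assume "z \<in> f -` B \<inter> UNIV"
      then have "f z \<in> B" by simp
      then obtain \<epsilon> where eps: "\<epsilon> > 0" "\<forall>y. dist y (f z) < \<epsilon> \<longrightarrow> y \<in> B" using opB unfolding open_dist by blast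
      define T where "T = (\<lambda>y. (2/\<epsilon>) *\<^sub>R (y + (- z))) -` N"
      have "open T" unfolding T_def by (rule lc_open_affine[OF opN])
      moreover have "z \<in> T" unfolding T_def using zN by simp
      moreover have "T \<subseteq> f -` B \<inter> UNIV"
      proof
        fix y assume "y \<in> T"
        then have "\<bar>f ((2/\<epsilon>) *\<^sub>R (y + (- z)))\<bar> \<le> 1" using fN unfolding T_def by simp
        moreover have "f ((2/\<epsilon>) *\<^sub>R (y + (- z))) = (2/\<epsilon>) * (f y - f z)"
          using f(1) by (simp add: linear_scale linear_add linear_neg linear_diff diff_divide_distrib)
        ultimately have h: "\<bar>(2/\<epsilon>) * (f y - f z)\<bar> \<le> 1" by metis
        have "\<bar>(2/\<epsilon>) * (f y - f z)\<bar> = (2/\<epsilon>) * \<bar>f y - f z\<bar>" using eps(1) by (simp only: abs_mult) simp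
        then have "(2/\<epsilon>) * \<bar>f y - f z\<bar> \<le> 1" using h by simp
        then have "\<bar>f y - f z\<bar> \<le> \<epsilon>/2" using eps(1) by (simp add: field_simps)
        then have "dist (f y) (f z) < \<epsilon>" using eps(1) by (simp add: dist_real_def)
        then show "y \<in> f -` B \<inter> UNIV" using eps(2) by simp
      qed
      ultimately show "\<exists>T. open T \<and> z \<in> T \<and> T \<subseteq> f -` B \<inter> UNIV" by blast
    qed
  qed
  show ?thesis using f(1) cont dpos sep by blast
qed



lemma main_up:
  fixes C X Y :: "'a::locally_convex_tvs set"
  assumes cone: "is_cone C"
    and neX: "X \<noteq> {}" and neY: "Y \<noteq> {}"
    and dX: "decomp_antichain_convex C X" and dY: "decomp_antichain_convex C Y"
    and clX: "closed X" and cK: "compact (convex hull Y)" and dis: "X \<inter> Y = {}"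
    and up: "upward C X"
  shows "strictly_separated X Y"
proof -
  have cvX: "convex X" by (rule convex_upward[OF cone dX up])
  have disK: "X \<inter> convex hull Y = {}" by (rule hull_disjoint_upward[OF cone dY up dis])
  have YK: "Y \<subseteq> convex hull Y" by (rule hull_subset)
  have neK: "convex hull Y \<noteq> {}" using neY YK by blast
  obtain f :: "'a \<Rightarrow> real" and \<delta> where f: "linear f" "continuous_on UNIV f" "\<delta> > 0"
    "\<forall>x\<in>X. \<forall>k\<in>convex hull Y. f k + \<delta> \<le> f x"
    using lc_separation[OF clX cvX cK convex_convex_hull neX neK disK] by blast
  define g where "g x = - f x" for x
  have lg: "linear g" unfolding g_def
    by (rule linearI) (simp_all add: linear_add[OF f(1)] linear_scale[OF f(1)])
  have cg: "continuous_on UNIV g" unfolding g_def by (intro continuous_on_minus f(2))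
  have gsep: "g x + \<delta> \<le> g y" if "x \<in> X" "y \<in> Y" for x y
    using f(4) that YK unfolding g_def by force
  obtain x0 where x0: "x0 \<in> X" using neX by blast
  obtain y0 where y0: "y0 \<in> Y" using neY by blast
  define s where "s = (SUP x\<in>X. ereal (g x))"
  have sle: "s \<le> ereal (g y - \<delta>)" if "y \<in> Y" for y
    unfolding s_def
  proof (rule SUP_least)
    fix x assume "x \<in> X"
    then have "g x + \<delta> \<le> g y" using gsep that by blast
    then show "ereal (g x) \<le> ereal (g y - \<delta>)" by simp
  qed
  have sge: "ereal (g x0) \<le> s" unfolding s_def using x0 by (rule SUP_upper)
  obtain r where r: "s = ereal r"
    using sle[OF y0] sge by (cases s) auto
  have "ereal (r + \<delta>) \<le> (INF y\<in>Y. ereal (g y))"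
  proof (rule INF_greatest)
    fix y assume "y \<in> Y"
    then have "r \<le> g y - \<delta>" using sle r by simp
    then show "ereal (r + \<delta>) \<le> ereal (g y)" by simp
  qed
  moreover have "s < ereal (r + \<delta>)" using r f(3) by simp
  ultimately have "s < (INF y\<in>Y. ereal (g y))" by (rule order.strict_trans2[rotated])
  then show ?thesis unfolding strictly_separated_def s_def using lg cg by blast
qed

theorem theorem9:
  fixes C X Y :: "'a::locally_convex_tvs set"
  assumes "is_cone C"
    and "X \<noteq> {}" and "Y \<noteq> {}"
    and "decomp_antichain_convex C X" and "decomp_antichain_convex C Y"
    and "closed X" and "compact (convex hull Y)" and "X \<inter> Y = {}"
  shows "(upward C X \<longrightarrow> strictly_separated X Y) \<and>
         (downward C X \<longrightarrow> strictly_separated X Y)"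
proof (intro conjI impI)
  assume "upward C X"
  then show "strictly_separated X Y" using main_up assms by blast
next
  assume "downward C X"
  then have "upward (uminus ` C) X" unfolding downward_def upward_def .
  then show "strictly_separated X Y"
    using main_up[OF cone_neg[OF assms(1)] assms(2,3) decomp_neg[OF assms(4)] decomp_neg[OF assms(5)] assms(6-8)]
    by blast
qed

end
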